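(* A bivariate tail dependence function $\Lambda\in\mathcal{M}_2$ is idempotent, i.e. $\Lambda*\Lambda=\Lambda$, if and only if $\Lambda(w_1,w_2)=\min\{w_1,w_2\}$ for all $(w_1,w_2)$ or $\Lambda\equiv0$.
   Context: $\mathcal{M}_2$ is the set of bivariate tail dependence functions $\Lambda(\mathbf{w})=\lim_{s\searrow0}C(s\mathbf{w})/s$, $\mathbf{w}\in\mathbb{R}_+^2$ ($\mathbb{R}_+=[0,\infty)$), of $2$-copulas $C$. The Markov product is $(\Lambda_1*\Lambda_2)(w_1,w_2):=\int_0^\infty\partial_2\Lambda_1(w_1,t)\,\partial_1\Lambda_2(t,w_2)\,dt$. *)

theory Defs
  imports "HOL-Analysis.Analysis"
begin

text \<open>A 2-copula, given by its values on the unit square (values outside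
  the unit square are irrelevant and unconstrained).\<close>
definition is_copula2 :: "(real \<Rightarrow> real \<Rightarrow> real) \<Rightarrow> bool" where
  "is_copula2 C \<longleftrightarrow>
     (\<forall>u\<in>{0..1}. C u 0 = 0 \<and> C 0 u = 0 \<and> C u 1 = u \<and> C 1 u = u) \<and>
     (\<forall>u1 u2 v1 v2. 0 \<le> u1 \<and> u1 \<le> u2 \<and> u2 \<le> 1 \<and> 0 \<le> v1 \<and> v1 \<le> v2 \<and> v2 \<le> 1 \<longrightarrow>
        C u2 v2 - C u2 v1 - C u1 v2 + C u1 v1 \<ge> 0)"

definition is_tdf_of :: "(real \<Rightarrow> real \<Rightarrow> real) \<Rightarrow> (real \<Rightarrow> real \<Rightarrow> real) \<Rightarrow> bool" where
  "is_tdf_of C \<Lambda> \<longleftrightarrow>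
     (\<forall>w1 w2. 0 \<le> w1 \<longrightarrow> 0 \<le> w2 \<longrightarrow>
        ((\<lambda>s. C (s * w1) (s * w2) / s) \<longlongrightarrow> \<Lambda> w1 w2) (at_right 0))"

definition M2 :: "(real \<Rightarrow> real \<Rightarrow> real) set" where
  "M2 = {\<Lambda>. \<exists>C. is_copula2 C \<and> is_tdf_of C \<Lambda>}"

text \<open>Markov product; the partial derivatives exist almost everywhere
  (tail dependence functions are Lipschitz), the integral is the Lebesgue
  integral over [0,infinity) w.r.t. (complete) Lebesgue measure.\<close>
definition markov_prod ::
  "(real \<Rightarrow> real \<Rightarrow> real) \<Rightarrow> (real \<Rightarrow> real \<Rightarrow> real) \<Rightarrow> real \<Rightarrow> real \<Rightarrow> real" where
  "markov_prod \<Lambda>1 \<Lambda>2 w1 w2 =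
     (LINT t:{0..}|lebesgue. deriv (\<lambda>t. \<Lambda>1 w1 t) t * deriv (\<lambda>t. \<Lambda>2 t w2) t)"

end

theory Submission
  imports Defs
begin


lemma cop_rect:
  assumes "is_copula2 C" "0 \<le> u1" "u1 \<le> u2" "u2 \<le> 1" "0 \<le> v1" "v1 \<le> v2" "v2 \<le> 1"
  shows "C u2 v2 - C u2 v1 - C u1 v2 + C u1 v1 \<ge> 0"
  using assms unfolding is_copula2_def by blast

lemma cop_bd:
  assumes "is_copula2 C" "u \<in> {0..1}"
  shows "C u 0 = 0" "C 0 u = 0" "C u 1 = u" "C 1 u = u"
  using assms unfolding is_copula2_def by auto

lemma cop_props:
  assumes C: "is_copula2 C" and u: "0 \<le> u" "u \<le> 1" and v: "0 \<le> v1" "v1 \<le> v2" "v2 \<le> 1"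
  shows "0 \<le> C u v1" "C u v1 \<le> u" "C u v1 \<le> v1" "C u v2 - C u v1 \<le> v2 - v1" "0 \<le> C u v2 - C u v1"
proof -
  have b: "C u 0 = 0" "C 0 v1 = 0" "C 0 v2 = 0" "C u 1 = u" "C 1 v1 = v1" "C 1 v2 = v2" "C 0 1 = 0" "C 1 0 = 0"
    using cop_bd[OF C] u v by auto
  show "0 \<le> C u v1" using cop_rect[OF C, of 0 u 0 v1] b u v by (simp add: cop_bd[OF C])
  show "C u v1 \<le> u" using cop_rect[OF C, of 0 u v1 1] b u v by simp
  show "C u v1 \<le> v1" using cop_rect[OF C, of u 1 0 v1] b u v by (simp add: cop_bd[OF C])
  show "C u v2 - C u v1 \<le> v2 - v1" using cop_rect[OF C, of u 1 v1 v2] b u v by simp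
  show "0 \<le> C u v2 - C u v1" using cop_rect[OF C, of 0 u v1 v2] b u v by simp
qed

lemma ev_small:
  fixes M :: real
  shows "eventually (\<lambda>s. 0 < s \<and> s * M \<le> 1) (at_right 0)"
proof -
  have "eventually (\<lambda>s. 0 < s \<and> s < 1 / (\<bar>M\<bar> + 1)) (at_right (0::real))"
    unfolding eventually_at_right_field
    by (rule exI[of _ "1 / (\<bar>M\<bar> + 1)"]) auto
  then show ?thesis
  proof (rule eventually_mono)
    fix s :: real assume s: "0 < s \<and> s < 1 / (\<bar>M\<bar> + 1)"
    then have "s * (\<bar>M\<bar> + 1) < 1" by (simp add: field_simps)
    moreover have "s * M \<le> s * (\<bar>M\<bar> + 1)" using s by (intro mult_left_mono) auto
    ultimately show "0 < s \<and> s * M \<le> 1" using s by (intro conjI; linarith)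
  qed
qed

lemma ev_small2:
  fixes a b :: real
  assumes "0 \<le> a" "0 \<le> b"
  shows "eventually (\<lambda>s. 0 < s \<and> 0 \<le> s * a \<and> s * a \<le> 1 \<and> 0 \<le> s * b \<and> s * b \<le> 1) (at_right 0)"
  using ev_small[of "a + b"]
proof eventually_elim
  case (elim s)
  then have "s * a + s * b \<le> 1" by (simp add: distrib_left)
  moreover have "0 \<le> s * a" "0 \<le> s * b" using elim assms by auto
  ultimately show ?case using elim by auto
qed

lemma tdf_lim:
  assumes "is_tdf_of C \<Lambda>" "0 \<le> a" "0 \<le> b"
  shows "((\<lambda>s. C (s * a) (s * b) / s) \<longlongrightarrow> \<Lambda> a b) (at_right 0)"
  using assms unfolding is_tdf_of_def by blast

lemma tdf_nonneg:
  assumes C: "is_copula2 C" and T: "is_tdf_of C \<Lambda>" and ab: "0 \<le> a" "0 \<le> b"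
  shows "0 \<le> \<Lambda> a b"
proof (rule tendsto_lowerbound[OF tdf_lim[OF T ab]])
  show "eventually (\<lambda>s. 0 \<le> C (s * a) (s * b) / s) (at_right 0)"
    using ev_small2[OF ab] by eventually_elim (use cop_props(1)[OF C] in auto)
qed simp

lemma tdf_le1:
  assumes C: "is_copula2 C" and T: "is_tdf_of C \<Lambda>" and ab: "0 \<le> a" "0 \<le> b"
  shows "\<Lambda> a b \<le> a"
proof (rule tendsto_upperbound[OF tdf_lim[OF T ab]])
  show "eventually (\<lambda>s. C (s * a) (s * b) / s \<le> a) (at_right 0)"
    using ev_small2[OF ab]
  proof eventually_elim
    case (elim s)
    then have "C (s * a) (s * b) \<le> s * a" using cop_props(2)[OF C] by auto
    then show ?case using elim by (simp add: divide_le_eq mult.commute)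
  qed
qed simp

lemma tdf_le2:
  assumes C: "is_copula2 C" and T: "is_tdf_of C \<Lambda>" and ab: "0 \<le> a" "0 \<le> b"
  shows "\<Lambda> a b \<le> b"
proof (rule tendsto_upperbound[OF tdf_lim[OF T ab]])
  show "eventually (\<lambda>s. C (s * a) (s * b) / s \<le> b) (at_right 0)"
    using ev_small2[OF ab]
  proof eventually_elim
    case (elim s)
    then have "C (s * a) (s * b) \<le> s * b" using cop_props(3)[OF C] by auto
    then show ?case using elim by (simp add: divide_le_eq mult.commute)
  qed
qed simp

lemma tdf_lip2:
  assumes C: "is_copula2 C" and T: "is_tdf_of C \<Lambda>" and ab: "0 \<le> a" "0 \<le> b1" "b1 \<le> b2"
  shows "\<Lambda> a b2 - \<Lambda> a b1 \<le> b2 - b1"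
proof (rule tendsto_upperbound[OF tendsto_diff[OF tdf_lim[OF T, of a b2] tdf_lim[OF T, of a b1]]])
  show "eventually (\<lambda>s. C (s * a) (s * b2) / s - C (s * a) (s * b1) / s \<le> b2 - b1) (at_right 0)"
    using ev_small2[OF ab(1) order_trans[OF ab(2) ab(3)]]
  proof eventually_elim
    case (elim s)
    then have "C (s * a) (s * b2) - C (s * a) (s * b1) \<le> s * b2 - s * b1"
      using cop_props(4)[OF C, of "s*a" "s*b1" "s*b2"] ab by (auto intro: mult_left_mono)
    then show ?case using elim by (simp add: divide_le_eq diff_divide_distrib[symmetric] right_diff_distrib mult.commute)
  qed
qed (use ab in auto)

lemma tdf_rect:
  assumes C: "is_copula2 C" and T: "is_tdf_of C \<Lambda>"
    and ab: "0 \<le> a1" "a1 \<le> a2" "0 \<le> b1" "b1 \<le> b2"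
  shows "\<Lambda> a2 b2 - \<Lambda> a2 b1 - \<Lambda> a1 b2 + \<Lambda> a1 b1 \<ge> 0"
proof (rule tendsto_lowerbound[OF tendsto_add[OF tendsto_diff[OF tendsto_diff[OF
      tdf_lim[OF T, of a2 b2] tdf_lim[OF T, of a2 b1]] tdf_lim[OF T, of a1 b2]] tdf_lim[OF T, of a1 b1]]])
  show "eventually (\<lambda>s. 0 \<le> C (s * a2) (s * b2) / s - C (s * a2) (s * b1) / s - C (s * a1) (s * b2) / s + C (s * a1) (s * b1) / s) (at_right 0)"
    using ev_small2[OF order_trans[OF ab(1) ab(2)] order_trans[OF ab(3) ab(4)]]
  proof eventually_elim
    case (elim s)
    then have "0 \<le> C (s * a2) (s * b2) - C (s * a2) (s * b1) - C (s * a1) (s * b2) + C (s * a1) (s * b1)"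
      using cop_rect[OF C, of "s*a1" "s*a2" "s*b1" "s*b2"] ab by (auto intro: mult_left_mono)
    then have "0 \<le> (C (s * a2) (s * b2) - C (s * a2) (s * b1) - C (s * a1) (s * b2) + C (s * a1) (s * b1)) / s"
      using elim by simp
    then show ?case by (simp add: add_divide_distrib diff_divide_distrib)
  qed
qed (use ab in auto)

lemma tdf_homog:
  assumes T: "is_tdf_of C \<Lambda>" and ab: "0 \<le> a" "0 \<le> b" and c: "0 < c"
  shows "\<Lambda> (c * a) (c * b) = c * \<Lambda> a b"
proof (rule tendsto_unique[OF _ tdf_lim[OF T, of "c*a" "c*b"]])
  have f: "filterlim (\<lambda>s. c * s) (at_right 0) (at_right (0::real))"
  proof (rule tendsto_imp_filterlim_at_right)
    show "((\<lambda>s. c * s) \<longlongrightarrow> 0) (at_right (0::real))"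
      by (rule tendsto_eq_intros) (auto intro!: tendsto_eq_intros)
    show "eventually (\<lambda>s. 0 < c * s) (at_right (0::real))"
      using c by (simp add: eventually_at_right_field) (auto intro!: exI[of _ 1])
  qed
  have "((\<lambda>s. c * (C ((c * s) * a) ((c * s) * b) / (c * s))) \<longlongrightarrow> c * \<Lambda> a b) (at_right 0)"
    by (rule tendsto_mult_left, rule filterlim_compose[OF tdf_lim[OF T ab] f])
  moreover have "eventually (\<lambda>s. c * (C ((c * s) * a) ((c * s) * b) / (c * s)) = C (s * (c * a)) (s * (c * b)) / s) (at_right (0::real))"
    using c by (simp add: eventually_at_right_field) (auto intro!: exI[of _ 1] simp: ac_simps)
  ultimately show "((\<lambda>s. C (s * (c * a)) (s * (c * b)) / s) \<longlongrightarrow> c * \<Lambda> a b) (at_right 0)"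
    by (rule Lim_transform_eventually)
qed (use ab c in auto)

lemma M2_swap:
  assumes "\<Lambda> \<in> M2"
  shows "(\<lambda>a b. \<Lambda> b a) \<in> M2"
proof -
  obtain C where C: "is_copula2 C" "is_tdf_of C \<Lambda>" using assms unfolding M2_def by blast
  have "is_copula2 (\<lambda>u v. C v u)"
    using C(1) unfolding is_copula2_def by (smt (verit))
  moreover have "is_tdf_of (\<lambda>u v. C v u) (\<lambda>a b. \<Lambda> b a)"
    using C(2) unfolding is_tdf_of_def by blast
  ultimately show ?thesis unfolding M2_def by blast
qed



lemma concave_geo:
  fixes g :: "real \<Rightarrow> real"
  assumes cont: "continuous_on {0..} g"
    and geo: "\<And>a r. 0 < a \<Longrightarrow> 1 < r \<Longrightarrow> g (a * r) - g a \<le> r * (g a - g (a / r))"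
    and xyz: "0 \<le> x" "x < y" "y < z"
  shows "(g z - g x) * (y - x) \<le> (g y - g x) * (z - x)"
proof (rule ccontr)
  assume neg: "\<not> ?thesis"
  define k where "k = (g z - g x) / (z - x)"
  define \<phi> where "\<phi> t = g t - g x - k * (t - x)" for t
  have zx: "z - x > 0" using xyz by simp
  have \<phi>x: "\<phi> x = 0" by (simp add: \<phi>_def)
  have \<phi>z: "\<phi> z = 0" using zx by (simp add: \<phi>_def k_def)
  have \<phi>y: "\<phi> y < 0"
  proof -
    have "(g y - g x) * (z - x) < (g z - g x) * (y - x)" using neg by simp
    then have "g y - g x < k * (y - x)" using zx by (simp add: k_def field_simps)
    then show ?thesis by (simp add: \<phi>_def)
  qed
  have geo\<phi>: "\<phi> (a * r) - \<phi> a \<le> r * (\<phi> a - \<phi> (a / r))" if "0 < a" "1 < r" for a r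
  proof -
    have e: "r * (a - a / r) = a * r - a" using that by (simp add: field_simps)
    have "r * (\<phi> a - \<phi> (a / r)) = r * (g a - g (a / r)) - k * (r * (a - a / r))"
      by (simp add: \<phi>_def algebra_simps)
    then have "r * (\<phi> a - \<phi> (a / r)) = r * (g a - g (a / r)) - k * (a * r - a)"
      by (simp only: e)
    moreover have "\<phi> (a * r) - \<phi> a = g (a * r) - g a - k * (a * r - a)"
      by (simp add: \<phi>_def algebra_simps)
    ultimately show ?thesis using geo[OF that] by simp
  qed
  have cont\<phi>: "continuous_on {x..z} \<phi>"
    unfolding \<phi>_def
    by (intro continuous_intros continuous_on_subset[OF cont]) (use xyz in auto)
  obtain t0 where t0: "t0 \<in> {x..z}" "\<And>t. t \<in> {x..z} \<Longrightarrow> \<phi> t0 \<le> \<phi> t"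
    using continuous_attains_inf[OF compact_Icc _ cont\<phi>] xyz by auto
  define m where "m = \<phi> t0"
  define S where "S = {x..z} \<inter> \<phi> -` {m}"
  have Sne: "S \<noteq> {}" using t0 by (auto simp: S_def m_def)
  have Sbdd: "bdd_above S" by (auto simp: S_def bdd_above_def)
  have Scl: "closed S" unfolding S_def
    by (rule continuous_closed_preimage[OF cont\<phi>]) auto
  define t1 where "t1 = Sup S"
  have t1S: "t1 \<in> S" using closed_contains_Sup[OF Sne Sbdd Scl] by (simp add: t1_def)
  have mle: "m \<le> \<phi> y" using t0 xyz by (auto simp: m_def)
  have t1m: "\<phi> t1 = m" and t1xz: "t1 \<in> {x..z}" using t1S by (auto simp: S_def)
  have "t1 \<noteq> x" using t1m mle \<phi>y \<phi>x by auto
  with t1xz have t1x: "x < t1" by auto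
  have "t1 \<noteq> z" using t1m mle \<phi>y \<phi>z by auto
  with t1xz have t1z: "t1 < z" by auto
  have t1pos: "0 < t1" using t1x xyz by simp
  define \<delta> where "\<delta> = min ((z - t1) / t1) ((t1 - x) / t1)"
  have \<delta>pos: "0 < \<delta>" using t1x t1z t1pos by (simp add: \<delta>_def)
  define r where "r = 1 + \<delta>"
  have r1: "1 < r" using \<delta>pos by (simp add: r_def)
  have up: "t1 * r \<le> z"
  proof -
    have "t1 * \<delta> \<le> t1 * ((z - t1) / t1)" using t1pos by (intro mult_left_mono) (auto simp: \<delta>_def)
    also have "t1 * ((z - t1) / t1) = z - t1" using t1pos by simp
    finally show ?thesis by (simp add: r_def algebra_simps)
  qed
  have lo: "x \<le> t1 / r"
  proof -
    have "x * \<delta> \<le> x * ((t1 - x) / t1)" using xyz by (intro mult_left_mono) (auto simp: \<delta>_def)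
    also have "\<dots> \<le> t1 - x"
    proof -
      have "x / t1 \<le> 1" using t1x t1pos by simp
      then have "x / t1 * (t1 - x) \<le> 1 * (t1 - x)" using t1x by (intro mult_right_mono) auto
      then show ?thesis by (simp add: field_simps)
    qed
    finally have "x * r \<le> t1" by (simp add: r_def algebra_simps)
    then show ?thesis using r1 by (simp add: field_simps)
  qed
  have gt: "t1 < t1 * r" using t1pos r1 by simp
  have p1: "m < \<phi> (t1 * r)"
  proof -
    have inr: "t1 * r \<in> {x..z}" using up gt t1x by auto
    have "m \<le> \<phi> (t1 * r)" using t0(2)[OF inr] by (simp add: m_def)
    moreover have "\<phi> (t1 * r) \<noteq> m"
    proof
      assume "\<phi> (t1 * r) = m"
      then have "t1 * r \<in> S" using inr by (auto simp: S_def)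
      then have "t1 * r \<le> t1" unfolding t1_def by (rule cSup_upper[OF _ Sbdd])
      with gt show False by simp
    qed
    ultimately show ?thesis by simp
  qed
  have p2: "m \<le> \<phi> (t1 / r)"
  proof -
    have "t1 / r \<le> t1" using t1pos r1 by (simp add: field_simps)
    then have "t1 / r \<in> {x..z}" using lo t1z by auto
    then show ?thesis using t0(2) by (simp add: m_def)
  qed
  have "\<phi> (t1 * r) - \<phi> t1 \<le> r * (\<phi> t1 - \<phi> (t1 / r))" by (rule geo\<phi>[OF t1pos r1])
  moreover have "r * (\<phi> t1 - \<phi> (t1 / r)) \<le> 0"
    using p2 t1m r1 by (intro mult_nonneg_nonpos) auto
  ultimately show False using p1 t1m by simp
qed



definition lc :: "(real \<Rightarrow> real) \<Rightarrow> bool" where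
  "lc g \<longleftrightarrow> (\<forall>s t. 0 \<le> s \<longrightarrow> s \<le> t \<longrightarrow> 0 \<le> g t - g s \<and> g t - g s \<le> t - s) \<and>
     (\<forall>x y z. 0 \<le> x \<longrightarrow> x < y \<longrightarrow> y < z \<longrightarrow> (g z - g x) * (y - x) \<le> (g y - g x) * (z - x))"

definition sl :: "(real \<Rightarrow> real) \<Rightarrow> real \<Rightarrow> real \<Rightarrow> real" where
  "sl g s t = (g t - g s) / (t - s)"

definition Dp :: "(real \<Rightarrow> real) \<Rightarrow> real \<Rightarrow> real" where
  "Dp g t = Sup (sl g t ` {t<..})"

definition Dm :: "(real \<Rightarrow> real) \<Rightarrow> real \<Rightarrow> real" where
  "Dm g t = Inf ((\<lambda>s. sl g s t) ` {0..<t})"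

lemma lc_lip: "lc g \<Longrightarrow> 0 \<le> s \<Longrightarrow> s \<le> t \<Longrightarrow> 0 \<le> g t - g s \<and> g t - g s \<le> t - s"
  unfolding lc_def by blast

lemma lc_conc: "lc g \<Longrightarrow> 0 \<le> x \<Longrightarrow> x < y \<Longrightarrow> y < z \<Longrightarrow> (g z - g x) * (y - x) \<le> (g y - g x) * (z - x)"
  unfolding lc_def by blast

lemma lc_cont: assumes "lc g" shows "continuous_on {0..} g"
proof (rule lipschitz_on_continuous_on)
  show "1-lipschitz_on {0..} g"
  proof (rule lipschitz_onI)
    fix x y :: real assume "x \<in> {0..}" "y \<in> {0..}"
    then show "dist (g x) (g y) \<le> 1 * dist x y"
      using lc_lip[OF assms, of x y] lc_lip[OF assms, of y x]
      by (cases "x \<le> y") (auto simp: dist_real_def)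
  qed simp
qed

lemma sl_bounds: assumes "lc g" "0 \<le> s" "s < t" shows "0 \<le> sl g s t" "sl g s t \<le> 1"
  using lc_lip[OF assms(1,2), of t] assms by (auto simp: sl_def divide_le_eq)

lemma sl_3:
  assumes "lc g" "0 \<le> x" "x < y" "y < z"
  shows "sl g x z \<le> sl g x y" "sl g y z \<le> sl g x z"
proof -
  have c: "(g z - g x) * (y - x) \<le> (g y - g x) * (z - x)" by (rule lc_conc[OF assms])
  show "sl g x z \<le> sl g x y" using c assms(3,4) by (simp add: sl_def field_simps)
  have "(g z - g y) * (z - x) \<le> (g z - g x) * (z - y)"
    using c by (simp add: algebra_simps)
  then show "sl g y z \<le> sl g x z" using assms(3,4) by (simp add: sl_def field_simps)
qed

lemma sl_3': assumes "lc g" "0 \<le> x" "x < y" "y < z" shows "sl g y z \<le> sl g x y"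
  using sl_3[OF assms] by linarith

lemma Dp_ge: assumes "lc g" "0 \<le> t" "t < u" shows "sl g t u \<le> Dp g t"
  unfolding Dp_def
proof (rule cSup_upper)
  show "bdd_above (sl g t ` {t<..})"
    using sl_bounds(2)[OF assms(1,2)] by (auto simp: bdd_above_def)
qed (use assms in auto)

lemma Dp_le: assumes "lc g" "0 \<le> s" "s < t" shows "Dp g t \<le> sl g s t"
  unfolding Dp_def
proof (rule cSup_least)
  show "sl g t ` {t<..} \<noteq> {}" by auto
  fix v assume "v \<in> sl g t ` {t<..}"
  then obtain u where "t < u" "v = sl g t u" by auto
  then show "v \<le> sl g s t" using sl_3'[OF assms(1,2,3), of u] by simp
qed

lemma Dp_bounds: assumes "lc g" "0 \<le> t" shows "0 \<le> Dp g t" "Dp g t \<le> 1"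
proof -
  show "0 \<le> Dp g t" using Dp_ge[OF assms, of "t+1"] sl_bounds(1)[OF assms, of "t+1"] by simp
  show "Dp g t \<le> 1" unfolding Dp_def
    by (rule cSup_least) (use sl_bounds(2)[OF assms] in auto)
qed

lemma Dp_anti: assumes "lc g" "0 \<le> s" "s \<le> t" shows "Dp g t \<le> Dp g s"
proof (cases "s = t")
  case False
  then have "s < t" using assms by simp
  then show ?thesis using Dp_le[OF assms(1,2)] Dp_ge[OF assms(1,2)] by (meson order_trans)
qed simp

lemma Dp_approx:
  assumes "lc g" "0 \<le> t" "0 < e"
  obtains u where "t < u" "Dp g t - e < sl g t u"
proof -
  have "\<exists>u>t. Dp g t - e < sl g t u"
  proof (rule ccontr)
    assume "\<not> ?thesis"
    then have *: "\<forall>u>t. sl g t u \<le> Dp g t - e" by (meson not_le)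
    have "Sup (sl g t ` {t<..}) \<le> Dp g t - e" by (rule cSup_least) (use * in auto)
    then have "Dp g t \<le> Dp g t - e" by (simp add: Dp_def)
    with assms show False by simp
  qed
  then show ?thesis using that by blast
qed

lemma Dp_lim:
  assumes "lc g" "0 \<le> t"
  shows "(\<lambda>n. sl g t (t + 1 / Suc n)) \<longlonglongrightarrow> Dp g t"
proof (rule LIMSEQ_I)
  fix e :: real assume e: "0 < e"
  obtain u where u: "t < u" "Dp g t - e < sl g t u" using Dp_approx[OF assms e] by blast
  obtain N where N: "inverse (real (Suc N)) < u - t" using reals_Archimedean[of "u - t"] u by auto
  show "\<exists>N. \<forall>n\<ge>N. norm (sl g t (t + 1 / Suc n) - Dp g t) < e"
  proof (intro exI allI impI)
    fix n assume "N \<le> n"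
    then have "1 / real (Suc n) \<le> 1 / real (Suc N)" by (simp add: frac_le)
    then have lt: "t + 1 / Suc n < u" using N by (simp add: inverse_eq_divide)
    have pos: "t < t + 1 / Suc n" by simp
    have "sl g t u \<le> sl g t (t + 1 / Suc n)" using sl_3(1)[OF assms pos lt] .
    moreover have "sl g t (t + 1 / Suc n) \<le> Dp g t" using Dp_ge[OF assms pos] .
    ultimately show "norm (sl g t (t + 1 / Suc n) - Dp g t) < e" using u by auto
  qed
qed

lemma Dm_le: assumes "lc g" "0 \<le> s" "s < t" shows "Dm g t \<le> sl g s t"
  unfolding Dm_def
proof (rule cInf_lower)
  show "bdd_below ((\<lambda>s. sl g s t) ` {0..<t})"
    using sl_bounds(1)[OF assms(1)] by (auto simp: bdd_below_def intro!: exI[of _ 0])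
qed (use assms in auto)

lemma Dp_le_Dm: assumes "lc g" "0 < t" shows "Dp g t \<le> Dm g t"
  unfolding Dm_def
proof (rule cInf_greatest)
  show "(\<lambda>s. sl g s t) ` {0..<t} \<noteq> {}" using assms by auto
qed (use Dp_le[OF assms(1)] in auto)

lemma Dm_le_Dp: assumes "lc g" "0 < s" "s < t" shows "Dm g t \<le> Dp g s"
  using Dm_le[OF assms(1), of s t] Dp_ge[OF assms(1), of s t] assms by simp

lemma Dm_approx:
  assumes "lc g" "0 < t" "0 < e"
  obtains s where "0 \<le> s" "s < t" "sl g s t < Dm g t + e"
proof -
  have "\<exists>s. 0 \<le> s \<and> s < t \<and> sl g s t < Dm g t + e"
  proof (rule ccontr)
    assume "\<not> ?thesis"
    then have *: "\<forall>s. 0 \<le> s \<and> s < t \<longrightarrow> Dm g t + e \<le> sl g s t" by (auto simp: not_less)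
    have "Dm g t + e \<le> Inf ((\<lambda>s. sl g s t) ` {0..<t})" by (rule cInf_greatest) (use * assms in auto)
    then have "Dm g t + e \<le> Dm g t" by (simp add: Dm_def)
    with assms show False by simp
  qed
  then show ?thesis using that by blast
qed

lemma lc_deriv:
  assumes g: "lc g" and t: "0 < t" and eq: "Dm g t \<le> Dp g t"
  shows "(g has_real_derivative Dp g t) (at t)"
  unfolding DERIV_def
proof (subst filterlim_at_split, rule conjI)
  let ?D = "Dp g t"
  have Dm: "Dm g t = ?D" using eq Dp_le_Dm[OF g t] by simp
  show "((\<lambda>h. (g (t + h) - g t) / h) \<longlongrightarrow> ?D) (at_right 0)"
  proof (rule tendstoI)
    fix e :: real assume e: "0 < e"
    obtain u where u: "t < u" "?D - e < sl g t u" using Dp_approx[OF g less_imp_le[OF t] e] by blast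
    show "eventually (\<lambda>h. dist ((g (t + h) - g t) / h) ?D < e) (at_right 0)"
      unfolding eventually_at_right_field
    proof (rule exI[of _ "u - t"], intro conjI allI impI)
      show "0 < u - t" using u by simp
      fix h :: real assume h: "0 < h" "h < u - t"
      have q: "(g (t + h) - g t) / h = sl g t (t + h)" by (simp add: sl_def)
      have "sl g t u \<le> sl g t (t + h)" using sl_3(1)[OF g _ _ , of t "t+h" u] t h by simp
      moreover have "sl g t (t + h) \<le> ?D" using Dp_ge[OF g, of t "t+h"] t h by simp
      ultimately show "dist ((g (t + h) - g t) / h) ?D < e" using u q by (simp add: dist_real_def)
    qed
  qed
  show "((\<lambda>h. (g (t + h) - g t) / h) \<longlongrightarrow> ?D) (at_left 0)"
  proof (rule tendstoI)
    fix e :: real assume e: "0 < e"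
    obtain s where s: "0 \<le> s" "s < t" "sl g s t < Dm g t + e" using Dm_approx[OF g t e] by blast
    show "eventually (\<lambda>h. dist ((g (t + h) - g t) / h) ?D < e) (at_left 0)"
      unfolding eventually_at_left_field
    proof (rule exI[of _ "s - t"], intro conjI allI impI)
      show "s - t < 0" using s by simp
      fix h :: real assume h: "s - t < h" "h < 0"
      have q: "(g (t + h) - g t) / h = sl g (t + h) t"
        unfolding sl_def by (metis minus_diff_eq diff_add_cancel add_diff_cancel_left' divide_minus_left divide_minus_right)
      have "sl g (t + h) t \<le> sl g s t" using sl_3(2)[OF g s(1), of "t+h" t] h by simp
      moreover have "Dm g t \<le> sl g (t + h) t" using Dm_le[OF g, of "t+h" t] s h by simp
      ultimately show "dist ((g (t + h) - g t) / h) ?D < e" using s q Dm by (simp add: dist_real_def)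
    qed
  qed
qed

lemma lc_countable:
  assumes g: "lc g"
  shows "countable {t. 0 < t \<and> \<not> Dm g t \<le> Dp g t}"
proof -
  let ?A = "{t. 0 < t \<and> \<not> Dm g t \<le> Dp g t}"
  have "\<forall>t\<in>?A. \<exists>q\<in>\<rat>. Dp g t < q \<and> q < Dm g t"
    using Rats_dense_in_real by (auto simp: not_le)
  then obtain q where q: "\<And>t. t \<in> ?A \<Longrightarrow> q t \<in> \<rat> \<and> Dp g t < q t \<and> q t < Dm g t"
    by metis
  have inj: "inj_on q ?A"
  proof (rule inj_onI)
    fix a b assume a: "a \<in> ?A" and b: "b \<in> ?A" and eq: "q a = q b"
    show "a = b"
    proof (rule ccontr)
      assume "a \<noteq> b"
      then consider "a < b" | "b < a" by linarith
      then show False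
      proof cases
        case 1
        then have "Dm g b \<le> Dp g a" using Dm_le_Dp[OF g, of a b] a by simp
        then show False using q[OF a] q[OF b] eq by simp
      next
        case 2
        then have "Dm g a \<le> Dp g b" using Dm_le_Dp[OF g, of b a] b by simp
        then show False using q[OF a] q[OF b] eq by simp
      qed
    qed
  qed
  have "countable (q ` ?A)"
    by (rule countable_subset[OF _ countable_rat]) (use q in auto)
  then show ?thesis using countable_image_inj_on inj by blast
qed



lemma lc_int_on: assumes "lc g" "0 \<le> a" shows "g integrable_on {a..b}"
  by (rule integrable_continuous_interval, rule continuous_on_subset[OF lc_cont[OF assms(1)]]) (use assms in auto)

lemma lc_int_bounds:
  assumes g: "lc g" and a: "0 \<le> a" and e: "0 \<le> e"
  shows "e * g a \<le> integral {a..a+e} g" "integral {a..a+e} g \<le> e * (g a + e)"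
proof -
  have c1: "integral {a..a+e} (\<lambda>_. g a) = e * g a" using e by (simp add: content_real)
  have c2: "integral {a..a+e} (\<lambda>_. g a + e) = e * (g a + e)" using e by (simp add: content_real)
  have "integral {a..a+e} (\<lambda>_. g a) \<le> integral {a..a+e} g"
    by (rule integral_le) (use lc_int_on[OF g a] lc_lip[OF g a] in auto)
  then show "e * g a \<le> integral {a..a+e} g" using c1 by linarith
  have "integral {a..a+e} g \<le> integral {a..a+e} (\<lambda>_. g a + e)"
  proof (rule integral_le)
    show "g integrable_on {a..a+e}" using lc_int_on[OF g a] .
  next
    fix t assume "t \<in> {a..a+e}"
    then show "g t \<le> g a + e" using lc_lip[OF g a, of t] by auto
  qed auto
  then show "integral {a..a+e} g \<le> e * (g a + e)" using c2 by linarith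
qed

lemma lc_FTC:
  assumes g: "lc g" and x: "0 \<le> x"
  shows "(Dp g has_integral (g x - g 0)) {0..x}"
proof -
  define e where "e k = inverse (real (Suc k))" for k
  have epos: "0 < e k" for k by (simp add: e_def)
  define f where "f k t = (g (t + e k) - g t) * real (Suc k)" for k t
  have fsl: "f k t = sl g t (t + 1 / Suc k)" for k t
    by (simp add: f_def sl_def e_def divide_inverse)
  define y where "y k = (integral {x..x + e k} g - integral {0..0 + e k} g) * real (Suc k)" for k
  have fint: "(f k has_integral y k) {0..x}" for k
  proof -
    have sh: "((\<lambda>t. g (t + e k)) has_integral integral {e k..x + e k} g) {0..x}"
    proof -
      have "(g has_integral integral {e k..x + e k} g) (cbox (0 + e k) (x + e k))"
        using integrable_integral[OF lc_int_on[OF g, of "e k" "x + e k"]] epos[of k] by simp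
      then have "((g \<circ> (+) (e k)) has_integral integral {e k..x + e k} g) (cbox 0 x)"
        by (subst has_integral_shift_cbox_iff)
      then show ?thesis by (simp add: o_def add.commute)
    qed
    have h0: "(g has_integral integral {0..x} g) {0..x}" using integrable_integral[OF lc_int_on[OF g, of 0 x]] by simp
    have comb: "integral {e k..x + e k} g - integral {0..x} g = integral {x..x + e k} g - integral {0..0 + e k} g"
    proof -
      have "integral {0..e k} g + integral {e k..x + e k} g = integral {0..x + e k} g"
        by (rule Henstock_Kurzweil_Integration.integral_combine) (use epos[of k] x lc_int_on[OF g, of 0] in \<open>auto simp: less_imp_le\<close>)
      moreover have "integral {0..x} g + integral {x..x + e k} g = integral {0..x + e k} g"
        by (rule Henstock_Kurzweil_Integration.integral_combine) (use epos[of k] x lc_int_on[OF g, of 0] in \<open>auto simp: less_imp_le\<close>)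
      ultimately show ?thesis by simp
    qed
    have "((\<lambda>t. (g (t + e k) - g t) * real (Suc k)) has_integral
           (integral {e k..x + e k} g - integral {0..x} g) * real (Suc k)) {0..x}"
      by (rule has_integral_mult_left, rule has_integral_diff[OF sh h0])
    then show ?thesis unfolding f_def y_def comb .
  qed
  have ylim: "y \<longlonglongrightarrow> g x - g 0"
  proof (rule tendsto_sandwich[where f = "\<lambda>k. g x - g 0 - e k" and h = "\<lambda>k. g x - g 0 + e k"])
    have e0: "e \<longlonglongrightarrow> 0" unfolding e_def by (rule LIMSEQ_inverse_real_of_nat)
    show "(\<lambda>k. g x - g 0 - e k) \<longlonglongrightarrow> g x - g 0" using tendsto_diff[OF tendsto_const e0] by simp
    show "(\<lambda>k. g x - g 0 + e k) \<longlonglongrightarrow> g x - g 0" using tendsto_add[OF tendsto_const e0] by simp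
    have yb: "g x - g 0 - e k \<le> y k \<and> y k \<le> g x - g 0 + e k" for k
    proof -
      have ek: "e k * real (Suc k) = 1" by (simp add: e_def)
      have b1: "e k * g x \<le> integral {x..x + e k} g" "integral {x..x + e k} g \<le> e k * (g x + e k)"
        using lc_int_bounds[OF g x, of "e k"] epos[of k] by auto
      have b2: "e k * g 0 \<le> integral {0..0 + e k} g" "integral {0..0 + e k} g \<le> e k * (g 0 + e k)"
        using lc_int_bounds[OF g, of 0 "e k"] epos[of k] by auto
      define I where "I = integral {x..x + e k} g - integral {0..0 + e k} g"
      have i1: "e k * (g x - g 0 - e k) \<le> I" "I \<le> e k * (g x - g 0 + e k)"
        using b1 b2 by (auto simp: I_def algebra_simps)
      have m1: "e k * (g x - g 0 - e k) * real (Suc k) \<le> I * real (Suc k)"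
        by (rule mult_right_mono[OF i1(1)]) simp
      have m2: "I * real (Suc k) \<le> e k * (g x - g 0 + e k) * real (Suc k)"
        by (rule mult_right_mono[OF i1(2)]) simp
      have ac: "e k * A * real (Suc k) = A * (e k * real (Suc k))" for A by (simp only: ac_simps)
      have q1: "e k * (g x - g 0 - e k) * real (Suc k) = g x - g 0 - e k" using ac ek by simp
      have q2: "e k * (g x - g 0 + e k) * real (Suc k) = g x - g 0 + e k" using ac ek by simp
      have "y k = I * real (Suc k)" by (simp add: y_def I_def)
      then show ?thesis using m1 m2 q1 q2 by linarith
    qed
    show "\<forall>\<^sub>F k in sequentially. g x - g 0 - e k \<le> y k" using yb by simp
    show "\<forall>\<^sub>F k in sequentially. y k \<le> g x - g 0 + e k" using yb by simp
  qed
  show ?thesis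
  proof (rule has_integral_dominated_convergence[OF fint _ _ _ ylim])
    show "(\<lambda>_. 1::real) integrable_on {0..x}" by (rule integrable_const_ivl)
    show "\<And>k. \<forall>t\<in>{0..x}. norm (f k t) \<le> 1"
      using sl_bounds[OF g] by (auto simp: fsl)
    show "\<forall>t\<in>{0..x}. (\<lambda>k. f k t) \<longlonglongrightarrow> Dp g t"
      using Dp_lim[OF g] by (auto simp: fsl)
  qed
qed



lemma M2E:
  assumes "\<Lambda> \<in> M2"
  obtains C where "is_copula2 C" "is_tdf_of C \<Lambda>"
  using assms unfolding M2_def by blast

lemma M2_nonneg: "\<Lambda> \<in> M2 \<Longrightarrow> 0 \<le> a \<Longrightarrow> 0 \<le> b \<Longrightarrow> 0 \<le> \<Lambda> a b"
  by (metis M2E tdf_nonneg)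
lemma M2_le1: "\<Lambda> \<in> M2 \<Longrightarrow> 0 \<le> a \<Longrightarrow> 0 \<le> b \<Longrightarrow> \<Lambda> a b \<le> a"
  by (metis M2E tdf_le1)
lemma M2_le2: "\<Lambda> \<in> M2 \<Longrightarrow> 0 \<le> a \<Longrightarrow> 0 \<le> b \<Longrightarrow> \<Lambda> a b \<le> b"
  by (metis M2E tdf_le2)
lemma M2_lip2: "\<Lambda> \<in> M2 \<Longrightarrow> 0 \<le> a \<Longrightarrow> 0 \<le> b1 \<Longrightarrow> b1 \<le> b2 \<Longrightarrow> \<Lambda> a b2 - \<Lambda> a b1 \<le> b2 - b1"
  by (metis M2E tdf_lip2)
lemma M2_rect: "\<Lambda> \<in> M2 \<Longrightarrow> 0 \<le> a1 \<Longrightarrow> a1 \<le> a2 \<Longrightarrow> 0 \<le> b1 \<Longrightarrow> b1 \<le> b2 \<Longrightarrow>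
    \<Lambda> a2 b2 - \<Lambda> a2 b1 - \<Lambda> a1 b2 + \<Lambda> a1 b1 \<ge> 0"
  by (metis M2E tdf_rect)
lemma M2_homog: "\<Lambda> \<in> M2 \<Longrightarrow> 0 \<le> a \<Longrightarrow> 0 \<le> b \<Longrightarrow> 0 < c \<Longrightarrow> \<Lambda> (c * a) (c * b) = c * \<Lambda> a b"
  by (metis M2E tdf_homog)

lemma M2_zero1: "\<Lambda> \<in> M2 \<Longrightarrow> 0 \<le> b \<Longrightarrow> \<Lambda> 0 b = 0"
  using M2_nonneg[of \<Lambda> 0 b] M2_le1[of \<Lambda> 0 b] by simp

lemma M2_mono2: "\<Lambda> \<in> M2 \<Longrightarrow> 0 \<le> a \<Longrightarrow> 0 \<le> b1 \<Longrightarrow> b1 \<le> b2 \<Longrightarrow> \<Lambda> a b1 \<le> \<Lambda> a b2"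
  using M2_rect[of \<Lambda> 0 a b1 b2] M2_zero1[of \<Lambda> b1] M2_zero1[of \<Lambda> b2] by simp

lemma M2_mono1: "\<Lambda> \<in> M2 \<Longrightarrow> 0 \<le> b \<Longrightarrow> 0 \<le> a1 \<Longrightarrow> a1 \<le> a2 \<Longrightarrow> \<Lambda> a1 b \<le> \<Lambda> a2 b"
  using M2_mono2[of "\<lambda>a b. \<Lambda> b a" b a1 a2] M2_swap[of \<Lambda>] by simp

lemma M2_lip1: "\<Lambda> \<in> M2 \<Longrightarrow> 0 \<le> b \<Longrightarrow> 0 \<le> a1 \<Longrightarrow> a1 \<le> a2 \<Longrightarrow> \<Lambda> a2 b - \<Lambda> a1 b \<le> a2 - a1"
  using M2_lip2[of "\<lambda>a b. \<Lambda> b a" b a1 a2] M2_swap[of \<Lambda>] by simp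

lemma lip_cont:
  fixes g :: "real \<Rightarrow> real"
  assumes "\<And>s t. 0 \<le> s \<Longrightarrow> s \<le> t \<Longrightarrow> 0 \<le> g t - g s \<and> g t - g s \<le> t - s"
  shows "continuous_on {0..} g"
proof (rule lipschitz_on_continuous_on)
  show "1-lipschitz_on {0..} g"
  proof (rule lipschitz_onI)
    fix x y :: real assume "x \<in> {0..}" "y \<in> {0..}"
    then show "dist (g x) (g y) \<le> 1 * dist x y"
      using assms[of x y] assms[of y x]
      by (cases "x \<le> y") (auto simp: dist_real_def)
  qed simp
qed

lemma M2_lc2:
  assumes L: "\<Lambda> \<in> M2" and w: "0 \<le> w"
  shows "lc (\<Lambda> w)"
proof -
  have lip: "0 \<le> \<Lambda> w t - \<Lambda> w s \<and> \<Lambda> w t - \<Lambda> w s \<le> t - s" if "0 \<le> s" "s \<le> t" for s t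
    using M2_mono2[OF L w that] M2_lip2[OF L w that] by simp
  have geo: "\<Lambda> w (a * r) - \<Lambda> w a \<le> r * (\<Lambda> w a - \<Lambda> w (a / r))" if a: "0 < a" and r: "1 < r" for a r
  proof -
    have r0: "0 < r" using r by simp
    have wr: "0 \<le> w / r" using w r0 by simp
    have e1: "\<Lambda> w (a * r) = r * \<Lambda> (w / r) a"
      using M2_homog[OF L wr _ r0, of a] a r0 by (simp add: mult.commute)
    have e2: "\<Lambda> w a = r * \<Lambda> (w / r) (a / r)"
      using M2_homog[OF L wr _ r0, of "a / r"] a r0 by simp
    have le1: "w / r \<le> w" using w r mult_left_mono[of 1 r w] by (simp add: divide_le_eq)
    have le2: "a / r \<le> a" using a r by (simp add: divide_le_eq)
    have rect: "\<Lambda> w a - \<Lambda> w (a / r) - \<Lambda> (w / r) a + \<Lambda> (w / r) (a / r) \<ge> 0"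
      using M2_rect[OF L wr le1 _ le2] a r0 by simp
    have "\<Lambda> w (a * r) - \<Lambda> w a = r * (\<Lambda> (w / r) a - \<Lambda> (w / r) (a / r))"
      using e1 e2 by (simp add: algebra_simps)
    also have "\<dots> \<le> r * (\<Lambda> w a - \<Lambda> w (a / r))"
      using rect r0 by (intro mult_left_mono) auto
    finally show ?thesis .
  qed
  have conc: "(\<Lambda> w z - \<Lambda> w x) * (y - x) \<le> (\<Lambda> w y - \<Lambda> w x) * (z - x)"
    if "0 \<le> x" "x < y" "y < z" for x y z
    by (rule concave_geo[OF lip_cont[OF lip] geo that]) auto
  show ?thesis unfolding lc_def using lip conc by blast
qed

lemma M2_lc1:
  assumes L: "\<Lambda> \<in> M2" and y: "0 \<le> y"
  shows "lc (\<lambda>t. \<Lambda> t y)"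
  using M2_lc2[OF M2_swap[OF L] y] .



lemma lint_countable_diff:
  fixes f g :: "real \<Rightarrow> real"
  assumes X: "countable X" and eq: "\<And>t. 0 < t \<Longrightarrow> t \<notin> X \<Longrightarrow> f t = g t"
  shows "(LINT t:{0..}|lebesgue. f t) = (LINT t:{0..}|lebesgue. g t)"
  unfolding set_lebesgue_integral_def
proof (rule integral_discrete_difference[where X = "insert 0 X"])
  show "countable (insert 0 X)" using X by simp
  fix x :: real
  show "emeasure lebesgue {x} = 0" by (simp add: emeasure_completion)
  show "{x} \<in> sets lebesgue" by simp
  assume "x \<in> space lebesgue" "x \<notin> insert 0 X"
  then show "indicator {0..} x *\<^sub>R f x = indicator {0..} x *\<^sub>R g x"
    using eq[of x] by (cases "0 < x") (auto simp: indicator_def)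
qed

definition NB :: "(real \<Rightarrow> real) \<Rightarrow> real set" where
  "NB g = {t. 0 < t \<and> \<not> Dm g t \<le> Dp g t}"

lemma deriv_Dp: "lc g \<Longrightarrow> 0 < t \<Longrightarrow> t \<notin> NB g \<Longrightarrow> deriv g t = Dp g t"
  by (rule DERIV_imp_deriv, rule lc_deriv) (auto simp: NB_def)

lemma NB_countable: "lc g \<Longrightarrow> countable (NB g)"
  unfolding NB_def by (rule lc_countable)

lemma markov_Dp:
  assumes L: "\<Lambda> \<in> M2" and w: "0 \<le> w1" "0 \<le> w2"
  shows "markov_prod \<Lambda> \<Lambda> w1 w2 = (LINT t:{0..}|lebesgue. Dp (\<Lambda> w1) t * Dp (\<lambda>t. \<Lambda> t w2) t)"
  unfolding markov_prod_def
proof (rule lint_countable_diff[where X = "NB (\<Lambda> w1) \<union> NB (\<lambda>t. \<Lambda> t w2)"])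
  show "countable (NB (\<Lambda> w1) \<union> NB (\<lambda>t. \<Lambda> t w2))"
    using NB_countable[OF M2_lc2[OF L w(1)]] NB_countable[OF M2_lc1[OF L w(2)]] by simp
  fix t :: real assume "0 < t" "t \<notin> NB (\<Lambda> w1) \<union> NB (\<lambda>t. \<Lambda> t w2)"
  then show "deriv (\<Lambda> w1) t * deriv (\<lambda>t. \<Lambda> t w2) t = Dp (\<Lambda> w1) t * Dp (\<lambda>t. \<Lambda> t w2) t"
    using deriv_Dp[OF M2_lc2[OF L w(1)]] deriv_Dp[OF M2_lc1[OF L w(2)]] by auto
qed

lemma Dp_meas:
  assumes g: "lc g"
  shows "(\<lambda>t. indicator {0..} t * Dp g t) \<in> borel_measurable lebesgue"
proof -
  have "mono (\<lambda>t. - Dp g (max 0 t))"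
    by (rule monoI) (use Dp_anti[OF g] in auto)
  then have "(\<lambda>t. - Dp g (max 0 t)) \<in> borel_measurable borel" by (rule borel_measurable_mono)
  then have "(\<lambda>t. - (- Dp g (max 0 t))) \<in> borel_measurable borel" by (rule borel_measurable_uminus)
  then have "(\<lambda>t. Dp g (max 0 t)) \<in> borel_measurable borel" by simp
  then have m: "(\<lambda>t. indicator {0..} t * Dp g (max 0 t)) \<in> borel_measurable borel" by measurable
  have "(\<lambda>t. indicator {0..} t * Dp g (max 0 t)) = (\<lambda>t. indicator {0..} t * Dp g t)"
    by (rule ext) (auto simp: indicator_def)
  with m have "(\<lambda>t. indicator {0..} t * Dp g t) \<in> borel_measurable lborel" by simp
  then show ?thesis by (rule measurable_completion)
qed

lemma lc_int_Icc:
  assumes g: "lc g" and x: "0 \<le> x"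
  shows "integrable lebesgue (\<lambda>t. indicator {0..x} t * Dp g t)"
        "integral\<^sup>L lebesgue (\<lambda>t. indicator {0..x} t * Dp g t) = g x - g 0"
proof -
  have hi: "(Dp g has_integral (g x - g 0)) {0..x}" by (rule lc_FTC[OF g x])
  have si: "set_integrable lebesgue {0..x} (Dp g)"
    by (rule nonnegative_absolutely_integrable_1) (use hi Dp_bounds[OF g] in \<open>auto simp: integrable_on_def\<close>)
  then show "integrable lebesgue (\<lambda>t. indicator {0..x} t * Dp g t)"
    by (simp add: set_integrable_def)
  have "(LINT t:{0..x}|lebesgue. Dp g t) = integral {0..x} (Dp g)"
    by (rule set_lebesgue_integral_eq_integral(2)[OF si])
  also have "\<dots> = g x - g 0" using hi by (rule integral_unique)
  finally show "integral\<^sup>L lebesgue (\<lambda>t. indicator {0..x} t * Dp g t) = g x - g 0"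
    by (simp add: set_lebesgue_integral_def)
qed

lemma lc_int_Ici:
  assumes g: "lc g" and B: "\<And>x. 0 \<le> x \<Longrightarrow> g x - g 0 \<le> B"
  shows "integrable lebesgue (\<lambda>t. indicator {0..} t * Dp g t)"
        "integral\<^sup>L lebesgue (\<lambda>t. indicator {0..} t * Dp g t) \<le> B"
proof -
  define f where "f n t = indicator {0..real n} t * Dp g t" for n t
  define I where "I n = g (real n) - g 0" for n
  have fi: "integrable lebesgue (f n)" for n
    unfolding f_def by (rule lc_int_Icc(1)[OF g]) simp
  have fI: "integral\<^sup>L lebesgue (f n) = I n" for n
    unfolding f_def I_def by (rule lc_int_Icc(2)[OF g]) simp
  have incI: "incseq I"
    unfolding incseq_def I_def using lc_lip[OF g] by force
  have bddI: "bdd_above (range I)" using B by (auto simp: I_def bdd_above_def intro!: exI[of _ B])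
  have Ilim: "I \<longlonglongrightarrow> (SUP n. I n)" by (rule LIMSEQ_incseq_SUP[OF bddI incI])
  have mono: "AE t in lebesgue. mono (\<lambda>n. f n t)"
  proof (rule AE_I2, rule monoI)
    fix t :: real and m n :: nat assume "m \<le> n"
    then show "f m t \<le> f n t" using Dp_bounds[OF g, of t]
      by (auto simp: f_def indicator_def)
  qed
  have conv: "AE t in lebesgue. (\<lambda>n. f n t) \<longlonglongrightarrow> indicator {0..} t * Dp g t"
  proof (rule AE_I2)
    fix t :: real
    obtain N where N: "t \<le> real N" using real_arch_simple by blast
    have "eventually (\<lambda>n. f n t = indicator {0..} t * Dp g t) sequentially"
      using eventually_ge_at_top[of N]
    proof eventually_elim
      case (elim n)
      then have "t \<le> real n" using N by linarith
      then show ?case by (auto simp: f_def indicator_def)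
    qed
    then show "(\<lambda>n. f n t) \<longlonglongrightarrow> indicator {0..} t * Dp g t" by (rule tendsto_eventually)
  qed
  have meas: "(\<lambda>t. indicator {0..} t * Dp g t) \<in> borel_measurable lebesgue" by (rule Dp_meas[OF g])
  have lim: "(\<lambda>n. integral\<^sup>L lebesgue (f n)) \<longlonglongrightarrow> (SUP n. I n)" using Ilim by (simp add: fI)
  note mc = integrable_monotone_convergence[OF fi mono conv lim meas]
    integral_monotone_convergence[OF fi mono conv lim meas]
  show "integrable lebesgue (\<lambda>t. indicator {0..} t * Dp g t)" using mc(1) .
  have "(SUP n. I n) \<le> B" by (rule cSUP_least) (use B in \<open>auto simp: I_def\<close>)
  then show "integral\<^sup>L lebesgue (\<lambda>t. indicator {0..} t * Dp g t) \<le> B" using mc(2) by simp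
qed



lemma key_step:
  assumes L: "\<Lambda> \<in> M2" and idem: "markov_prod \<Lambda> \<Lambda> 1 y = \<Lambda> 1 y" and y: "0 < y"
  shows "AE t in lebesgue. (Dp (\<Lambda> 1) t - Dp (\<Lambda> 1) y) *
           (indicator {0..} t * Dp (\<lambda>t. \<Lambda> t y) t - indicator {0..y} t) = 0"
proof -
  define H where "H = Dp (\<Lambda> 1)"
  define K where "K = Dp (\<lambda>t. \<Lambda> t y)"
  have g1: "lc (\<Lambda> 1)" by (rule M2_lc2[OF L]) simp
  have gk: "lc (\<lambda>t. \<Lambda> t y)" by (rule M2_lc1[OF L]) (use y in simp)
  define c where "c = H y"
  define A where "A t = indicator {0..} t * H t * K t" for t :: real
  define B where "B t = indicator {0..y} t * H t" for t :: real
  define Kt where "Kt t = indicator {0..} t * K t" for t :: real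
  define Iy where "Iy t = (indicator {0..y} t :: real)" for t :: real
  have Ktint: "integrable lebesgue Kt" and KtI: "integral\<^sup>L lebesgue Kt \<le> y"
  proof -
    have b: "(\<lambda>t. \<Lambda> t y) x - (\<lambda>t. \<Lambda> t y) 0 \<le> y" if "0 \<le> x" for x
      using M2_le2[OF L that, of y] M2_zero1[OF L, of y] y by simp
    show "integrable lebesgue Kt" unfolding Kt_def K_def by (rule lc_int_Ici(1)[OF gk b])
    show "integral\<^sup>L lebesgue Kt \<le> y" unfolding Kt_def K_def by (rule lc_int_Ici(2)[OF gk b])
  qed
  have Bint: "integrable lebesgue B" and BI: "integral\<^sup>L lebesgue B = \<Lambda> 1 y"
  proof -
    show "integrable lebesgue B" unfolding B_def H_def by (rule lc_int_Icc(1)[OF g1]) (use y in simp)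
    have "integral\<^sup>L lebesgue B = \<Lambda> 1 y - \<Lambda> 1 0" unfolding B_def H_def by (rule lc_int_Icc(2)[OF g1]) (use y in simp)
    moreover have "\<Lambda> 1 0 = 0" using M2_le2[OF L, of 1 0] M2_nonneg[OF L, of 1 0] by simp
    ultimately show "integral\<^sup>L lebesgue B = \<Lambda> 1 y" by simp
  qed
  have Iint: "integrable lebesgue Iy" and II: "integral\<^sup>L lebesgue Iy = y"
  proof -
    have "(\<lambda>t. indicator {0..y} t * Dp (\<lambda>x. x) t) = Iy"
    proof
      fix t show "indicator {0..y} t * Dp (\<lambda>x. x) t = Iy t"
      proof (cases "t \<in> {0..y}")
        case True
        have "Dp (\<lambda>x. x) t = 1" unfolding Dp_def sl_def
          by (rule cSup_eq_maximum) (auto intro!: image_eqI[of _ _ "t+1"])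
        then show ?thesis using True by (simp add: Iy_def)
      qed (simp add: Iy_def)
    qed
    moreover have idlc: "lc (\<lambda>x. x)" unfolding lc_def by auto
    ultimately show "integrable lebesgue Iy" "integral\<^sup>L lebesgue Iy = y"
      using lc_int_Icc[OF idlc, of y] y by auto
  qed
  have Ameas: "A \<in> borel_measurable lebesgue"
  proof -
    have "(\<lambda>t. (indicator {0..} t * H t) * (indicator {0..} t * K t)) \<in> borel_measurable lebesgue"
      using Dp_meas[OF g1] Dp_meas[OF gk] unfolding H_def K_def by (rule borel_measurable_times)
    moreover have "(\<lambda>t. (indicator {0..} t * H t) * (indicator {0..} t * K t)) = A"
      by (rule ext) (auto simp: A_def indicator_def)
    ultimately show ?thesis by simp
  qed
  have Aint: "integrable lebesgue A"
  proof (rule Bochner_Integration.integrable_bound[OF Ktint Ameas], rule AE_I2)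
    fix t :: real
    show "norm (A t) \<le> norm (Kt t)"
    proof (cases "0 \<le> t")
      case True
      have "0 \<le> H t" "H t \<le> 1" "0 \<le> K t" using Dp_bounds[OF g1 True] Dp_bounds[OF gk True]
        by (auto simp: H_def K_def)
      then have "H t * K t \<le> 1 * K t" by (intro mult_right_mono) auto
      then show ?thesis using True \<open>0 \<le> H t\<close> \<open>0 \<le> K t\<close> by (simp add: A_def Kt_def)
    qed (simp add: A_def Kt_def)
  qed
  have AI: "integral\<^sup>L lebesgue A = \<Lambda> 1 y"
  proof -
    have "markov_prod \<Lambda> \<Lambda> 1 y = (LINT t:{0..}|lebesgue. H t * K t)"
      unfolding H_def K_def by (rule markov_Dp[OF L]) (use y in auto)
    also have "\<dots> = integral\<^sup>L lebesgue A"
      unfolding set_lebesgue_integral_def A_def by (simp add: mult.assoc)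
    finally show ?thesis using idem by simp
  qed
  define D where "D t = (H t - c) * (Kt t - Iy t)" for t
  have Deq: "D = (\<lambda>t. A t - B t - c * Kt t + c * Iy t)"
    by (rule ext) (auto simp: D_def A_def B_def Kt_def Iy_def indicator_def algebra_simps)
  have Dint: "integrable lebesgue D" unfolding Deq using Aint Bint Ktint Iint by simp
  have DI: "integral\<^sup>L lebesgue D = c * (y - integral\<^sup>L lebesgue Kt)"
    unfolding Deq using Aint Bint Ktint Iint AI BI II by (simp add: algebra_simps)
  have c0: "0 \<le> c" using Dp_bounds[OF g1, of y] y by (simp add: c_def H_def)
  have DI0: "0 \<le> integral\<^sup>L lebesgue D" unfolding DI using c0 KtI by simp
  have Dle: "D t \<le> 0" for t
  proof -
    consider "t < 0" | "0 \<le> t" "t \<le> y" | "y < t" by linarith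
    then show ?thesis
    proof cases
      case 1 then show ?thesis by (simp add: D_def Kt_def Iy_def)
    next
      case 2
      have "H y \<le> H t" unfolding H_def by (rule Dp_anti[OF g1 2])
      moreover have "K t \<le> 1" using Dp_bounds[OF gk 2(1)] by (simp add: K_def)
      ultimately show ?thesis using 2 by (auto simp: D_def Kt_def Iy_def c_def intro: mult_nonneg_nonpos)
    next
      case 3
      have "H t \<le> H y" unfolding H_def by (rule Dp_anti[OF g1]) (use 3 y in auto)
      moreover have "0 \<le> K t" using Dp_bounds[OF gk] 3 y by (simp add: K_def)
      ultimately show ?thesis using 3 y by (auto simp: D_def Kt_def Iy_def c_def intro: mult_nonpos_nonneg)
    qed
  qed
  have "integral\<^sup>L lebesgue (\<lambda>t. - D t) = 0"
  proof -
    have "0 \<le> integral\<^sup>L lebesgue (\<lambda>t. - D t)" by (rule integral_nonneg_AE) (use Dle in auto)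
    moreover have "integral\<^sup>L lebesgue (\<lambda>t. - D t) = - integral\<^sup>L lebesgue D" by simp
    ultimately show ?thesis using DI0 by simp
  qed
  then have "AE t in lebesgue. - D t = 0"
    using integral_nonneg_eq_0_iff_AE[of lebesgue "\<lambda>t. - D t"] Dint Dle by auto
  then show ?thesis
    by eventually_elim (simp add: D_def H_def K_def Kt_def Iy_def c_def)
qed



lemma lam_x_y:
  assumes L: "\<Lambda> \<in> M2" and idem: "markov_prod \<Lambda> \<Lambda> 1 y = \<Lambda> 1 y"
    and x: "0 < x" and xy: "x < y"
    and Hx: "\<And>t. 0 < t \<Longrightarrow> t < x \<Longrightarrow> Dp (\<Lambda> 1) y < Dp (\<Lambda> 1) t"
  shows "\<Lambda> x y = x"
proof -
  have y: "0 < y" using x xy by simp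
  define K where "K = Dp (\<lambda>t. \<Lambda> t y)"
  have gk: "lc (\<lambda>t. \<Lambda> t y)" by (rule M2_lc1[OF L]) (use y in simp)
  have "AE t in lebesgue. t \<in> {0<..<x} \<longrightarrow> K t = 1"
    using key_step[OF L idem y]
  proof eventually_elim
    case (elim t)
    show ?case
    proof
      assume t: "t \<in> {0<..<x}"
      then have "Dp (\<Lambda> 1) t - Dp (\<Lambda> 1) y \<noteq> 0" using Hx[of t] by auto
      then have "indicator {0..} t * K t - indicator {0..y} t = (0::real)"
        using elim by (simp add: K_def)
      then show "K t = 1" using t xy by (simp add: indicator_def)
    qed
  qed
  then obtain N where N: "{t \<in> space lebesgue. \<not> (t \<in> {0<..<x} \<longrightarrow> K t = 1)} \<subseteq> N"
    "emeasure lebesgue N = 0" "N \<in> sets lebesgue"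
    by (rule AE_E)
  have negl: "negligible (N \<union> {0, x})"
  proof -
    have "N \<in> null_sets lebesgue" using N by (simp add: null_setsI)
    then have "insert 0 (insert x N) \<in> null_sets lebesgue" by simp
    then show ?thesis by (simp add: negligible_iff_null_sets)
  qed
  have "(K has_integral (\<Lambda> x y - \<Lambda> 0 y)) {0..x}"
    unfolding K_def by (rule lc_FTC[OF gk]) (use x in simp)
  moreover have "\<Lambda> 0 y = 0" by (rule M2_zero1[OF L]) (use y in simp)
  ultimately have h1: "(K has_integral \<Lambda> x y) {0..x}" by simp
  have "((\<lambda>_. 1::real) has_integral x) {0..x}"
    using has_integral_const_real[of "1::real" 0 x] x by (simp add: content_real)
  then have h2: "(K has_integral x) {0..x}"
  proof (rule has_integral_spike[OF negl, rotated])
    fix t assume "t \<in> {0..x} - (N \<union> {0, x})"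
    then have "t \<in> {0<..<x}" "t \<notin> N" by auto
    then show "K t = 1" using N(1) by auto
  qed
  show ?thesis using has_integral_unique[OF h1 h2] .
qed

lemma lam11_one:
  assumes L: "\<Lambda> \<in> M2" and idem: "\<And>y. 0 < y \<Longrightarrow> markov_prod \<Lambda> \<Lambda> 1 y = \<Lambda> 1 y"
    and pos: "0 < \<Lambda> 1 1"
  shows "\<Lambda> 1 1 = 1"
proof -
  define lam where "lam = \<Lambda> 1 1"
  define H where "H = Dp (\<Lambda> 1)"
  have g1: "lc (\<Lambda> 1)" by (rule M2_lc2[OF L]) simp
  have l1: "lam \<le> 1" using M2_le1[OF L, of 1 1] by (simp add: lam_def)
  have lpos: "0 < lam" using pos by (simp add: lam_def)
  define p where "p = lam / 4"
  define q where "q = 8 / lam"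
  have p0: "0 < p" and p1: "p < 1" using lpos l1 by (auto simp: p_def)
  have q1: "1 < q" using lpos l1 by (simp add: q_def field_simps)
  have Hp: "3 * lam / 4 \<le> H p"
  proof -
    have "sl (\<Lambda> 1) p 1 \<le> H p" unfolding H_def by (rule Dp_ge[OF g1]) (use p0 p1 in auto)
    moreover have "lam - p \<le> sl (\<Lambda> 1) p 1"
    proof -
      have a: "\<Lambda> 1 p \<le> p" using M2_le2[OF L, of 1 p] p0 by simp
      have b: "0 \<le> lam - \<Lambda> 1 p" using M2_mono2[OF L, of 1 p 1] p0 p1 by (simp add: lam_def)
      have "lam - \<Lambda> 1 p \<le> (lam - \<Lambda> 1 p) / (1 - p)"
        using b p0 p1 by (simp add: le_divide_eq mult_left_le)
      then show ?thesis using a by (simp add: sl_def lam_def)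
    qed
    ultimately show ?thesis by (simp add: p_def)
  qed
  have Hq: "H q \<le> lam / 4"
  proof -
    have "H q \<le> sl (\<Lambda> 1) (q / 2) q" unfolding H_def by (rule Dp_le[OF g1]) (use q1 in auto)
    moreover have "sl (\<Lambda> 1) (q / 2) q \<le> 2 / q"
    proof -
      have "\<Lambda> 1 q \<le> 1" using M2_le1[OF L, of 1 q] q1 by simp
      moreover have "0 \<le> \<Lambda> 1 (q / 2)" using M2_nonneg[OF L, of 1 "q/2"] q1 by simp
      ultimately have "\<Lambda> 1 q - \<Lambda> 1 (q / 2) \<le> 1" by simp
      then show ?thesis using q1 by (simp add: sl_def divide_le_eq field_simps)
    qed
    moreover have "2 / q = lam / 4" using lpos by (simp add: q_def)
    ultimately show ?thesis by simp
  qed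
  define v where "v = lam / 2"
  define S where "S = {t. 0 < t \<and> H t < v}"
  define x where "x = Inf S"
  have qS: "q \<in> S" using Hq lpos q1 by (simp add: S_def v_def)
  have Sne: "S \<noteq> {}" using qS by auto
  have Sbdd: "bdd_below S" by (auto simp: S_def bdd_below_def intro!: exI[of _ 0])
  have pS: "p \<le> s" if "s \<in> S" for s
  proof (rule ccontr)
    assume "\<not> p \<le> s"
    then have "H p \<le> H s" unfolding H_def using that by (intro Dp_anti[OF g1]) (auto simp: S_def)
    then show False using that Hp lpos by (simp add: S_def v_def)
  qed
  have xp: "p \<le> x" unfolding x_def by (rule cInf_greatest[OF Sne]) (use pS in auto)
  have x0: "0 < x" using xp p0 by simp
  have below: "v \<le> H t" if "0 < t" "t < x" for t
  proof (rule ccontr)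
    assume "\<not> v \<le> H t"
    then have "t \<in> S" using that by (simp add: S_def)
    then have "x \<le> t" unfolding x_def by (rule cInf_lower[OF _ Sbdd])
    with that show False by simp
  qed
  have above: "H y < v" if "x < y" for y
  proof -
    have "Inf S < y" using that by (simp add: x_def)
    then obtain s where s: "s \<in> S" "s < y" using cInf_less_iff[OF Sne Sbdd] by blast
    then have "H y \<le> H s" unfolding H_def by (intro Dp_anti[OF g1]) (auto simp: S_def)
    then show ?thesis using s by (simp add: S_def)
  qed
  have ge: "x / y \<le> lam" if xy: "x < y" for y
  proof -
    have y0: "0 < y" using xy x0 by simp
    have "\<Lambda> x y = x"
      by (rule lam_x_y[OF L idem[OF y0] x0 xy]) (use below above[OF xy] in \<open>fastforce simp: H_def\<close>)
    moreover have "\<Lambda> (y * (x / y)) (y * 1) = y * \<Lambda> (x / y) 1"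
      by (rule M2_homog[OF L]) (use x0 y0 in auto)
    ultimately have "\<Lambda> (x / y) 1 = x / y" using y0 by (simp add: field_simps)
    moreover have "\<Lambda> (x / y) 1 \<le> \<Lambda> 1 1"
      by (rule M2_mono1[OF L]) (use x0 y0 xy in auto)
    ultimately show ?thesis by (simp add: lam_def)
  qed
  have "1 \<le> lam"
  proof (rule ccontr)
    assume "\<not> 1 \<le> lam"
    define y where "y = 2 * x / (1 + lam)"
    have "x < y" using x0 lpos \<open>\<not> 1 \<le> lam\<close> by (simp add: y_def field_simps)
    moreover have "x / y = (1 + lam) / 2" using x0 lpos by (simp add: y_def field_simps)
    ultimately have "(1 + lam) / 2 \<le> lam" using ge by metis
    then show False using \<open>\<not> 1 \<le> lam\<close> by simp
  qed
  then show ?thesis using l1 by (simp add: lam_def)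
qed



lemma zero_case:
  assumes L: "\<Lambda> \<in> M2" and z: "\<Lambda> 1 1 = 0"
  shows "\<forall>w1\<ge>0. \<forall>w2\<ge>0. \<Lambda> w1 w2 = 0"
proof (intro allI impI)
  have a1: "\<Lambda> a 1 = 0" if a: "0 \<le> a" for a
  proof (cases "a \<le> 1")
    case True
    then show ?thesis using M2_nonneg[OF L a, of 1] M2_mono1[OF L, of 1 a 1] a z by simp
  next
    case False
    then have a0: "0 < a" by simp
    have "\<Lambda> (a * 1) (a * (1 / a)) = a * \<Lambda> 1 (1 / a)" by (rule M2_homog[OF L]) (use a0 in auto)
    moreover have "\<Lambda> 1 (1 / a) \<le> \<Lambda> 1 1" by (rule M2_mono2[OF L]) (use False in auto)
    moreover have "0 \<le> \<Lambda> 1 (1 / a)" by (rule M2_nonneg[OF L]) (use a0 in auto)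
    ultimately have "\<Lambda> a 1 = a * 0" using a0 z by simp
    then show ?thesis by simp
  qed
  fix w1 w2 :: real assume w: "0 \<le> w1" "0 \<le> w2"
  show "\<Lambda> w1 w2 = 0"
  proof (cases "w2 = 0")
    case True then show ?thesis using M2_nonneg[OF L w] M2_le2[OF L w] by simp
  next
    case False
    then have w20: "0 < w2" using w by simp
    have "\<Lambda> (w2 * (w1 / w2)) (w2 * 1) = w2 * \<Lambda> (w1 / w2) 1" by (rule M2_homog[OF L]) (use w w20 in auto)
    then show ?thesis using a1[of "w1 / w2"] w w20 by simp
  qed
qed

lemma one_case:
  assumes L: "\<Lambda> \<in> M2" and z: "\<Lambda> 1 1 = 1"
  shows "\<forall>w1\<ge>0. \<forall>w2\<ge>0. \<Lambda> w1 w2 = min w1 w2"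
proof (intro allI impI)
  have a1: "\<Lambda> a 1 = min a 1" if a: "0 \<le> a" for a
  proof (cases "a \<le> 1")
    case True
    then show ?thesis using M2_lip1[OF L, of 1 a 1] M2_le1[OF L a, of 1] a z by simp
  next
    case False
    then show ?thesis using M2_mono1[OF L, of 1 1 a] M2_le2[OF L a, of 1] a z by simp
  qed
  fix w1 w2 :: real assume w: "0 \<le> w1" "0 \<le> w2"
  show "\<Lambda> w1 w2 = min w1 w2"
  proof (cases "w2 = 0")
    case True then show ?thesis using M2_nonneg[OF L w] M2_le2[OF L w] w by simp
  next
    case False
    then have w20: "0 < w2" using w by simp
    have "\<Lambda> (w2 * (w1 / w2)) (w2 * 1) = w2 * \<Lambda> (w1 / w2) 1" by (rule M2_homog[OF L]) (use w w20 in auto)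
    then have "\<Lambda> w1 w2 = w2 * min (w1 / w2) 1" using a1[of "w1 / w2"] w w20 by simp
    also have "\<dots> = min w1 w2" using w20 by (simp add: min_def field_simps)
    finally show ?thesis .
  qed
qed

lemma forward:
  assumes L: "\<Lambda> \<in> M2" and idem: "\<forall>w1\<ge>0. \<forall>w2\<ge>0. markov_prod \<Lambda> \<Lambda> w1 w2 = \<Lambda> w1 w2"
  shows "(\<forall>w1\<ge>0. \<forall>w2\<ge>0. \<Lambda> w1 w2 = min w1 w2) \<or> (\<forall>w1\<ge>0. \<forall>w2\<ge>0. \<Lambda> w1 w2 = 0)"
proof (cases "\<Lambda> 1 1 = 0")
  case True then show ?thesis using zero_case[OF L] by blast
next
  case False
  then have pos: "0 < \<Lambda> 1 1" using M2_nonneg[OF L, of 1 1] by simp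
  have "\<Lambda> 1 1 = 1" by (rule lam11_one[OF L _ pos]) (use idem in auto)
  then show ?thesis using one_case[OF L] by blast
qed

lemma deriv_local:
  fixes f h :: "real \<Rightarrow> real"
  assumes "open U" "t \<in> U" "\<And>s. s \<in> U \<Longrightarrow> f s = h s" "(h has_real_derivative D) (at t)"
  shows "deriv f t = D"
  by (rule DERIV_imp_deriv, rule has_field_derivative_transform_within_open[OF assms(4,1,2)]) (use assms(3) in auto)

lemma Dp_id: "Dp (\<lambda>x. x) t = 1"
  unfolding Dp_def sl_def
  by (rule cSup_eq_maximum) (auto intro!: image_eqI[of _ _ "t+1"])

lemma lc_id: "lc (\<lambda>x. x)" unfolding lc_def by auto

lemma backward_zero:
  fixes \<Lambda> :: "real \<Rightarrow> real \<Rightarrow> real" and w1 w2 :: real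
  assumes z: "\<forall>w1\<ge>0. \<forall>w2\<ge>0. \<Lambda> w1 w2 = 0" and w: "0 \<le> w1" "0 \<le> w2"
  shows "markov_prod \<Lambda> \<Lambda> w1 w2 = \<Lambda> w1 w2"
proof -
  have "markov_prod \<Lambda> \<Lambda> w1 w2 = (LINT t:{0..}|lebesgue. (0::real))"
    unfolding markov_prod_def
  proof (rule trans, rule lint_countable_diff[where X = "{}" and g = "\<lambda>_. 0"])
    fix t :: real assume t: "0 < t"
    have "deriv (\<Lambda> w1) t = 0"
      by (rule deriv_local[where U = "{0<..}" and h = "\<lambda>_. 0"]) (use t z w in auto)
    then show "deriv (\<Lambda> w1) t * deriv (\<lambda>t. \<Lambda> t w2) t = 0" by simp
  qed simp_all
  then show ?thesis using z w by (simp add: set_lebesgue_integral_def)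
qed

lemma backward_min:
  fixes \<Lambda> :: "real \<Rightarrow> real \<Rightarrow> real" and w1 w2 :: real
  assumes z: "\<forall>w1\<ge>0. \<forall>w2\<ge>0. \<Lambda> w1 w2 = min w1 w2" and w: "0 \<le> w1" "0 \<le> w2"
  shows "markov_prod \<Lambda> \<Lambda> w1 w2 = \<Lambda> w1 w2"
proof -
  define m where "m = min w1 w2"
  have m0: "0 \<le> m" using w by (simp add: m_def)
  have d1: "deriv (\<Lambda> w1) t = (if t < w1 then 1 else 0)" if t: "0 < t" "t \<noteq> w1" for t
  proof (cases "t < w1")
    case True
    have "deriv (\<Lambda> w1) t = 1"
      by (rule deriv_local[where U = "{0<..<w1}" and h = "\<lambda>x. x"]) (use t True z w in auto)
    then show ?thesis using True by simp
  next
    case False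
    have "deriv (\<Lambda> w1) t = 0"
      by (rule deriv_local[where U = "{w1<..}" and h = "\<lambda>_. w1"]) (use t False z w in auto)
    then show ?thesis using False by simp
  qed
  have d2: "deriv (\<lambda>t. \<Lambda> t w2) t = (if t < w2 then 1 else 0)" if t: "0 < t" "t \<noteq> w2" for t
  proof (cases "t < w2")
    case True
    have "deriv (\<lambda>t. \<Lambda> t w2) t = 1"
      by (rule deriv_local[where U = "{0<..<w2}" and h = "\<lambda>x. x"]) (use t True z w in auto)
    then show ?thesis using True by simp
  next
    case False
    have "deriv (\<lambda>t. \<Lambda> t w2) t = 0"
      by (rule deriv_local[where U = "{w2<..}" and h = "\<lambda>_. w2"]) (use t False z w in auto)
    then show ?thesis using False by simp
  qed
  have "markov_prod \<Lambda> \<Lambda> w1 w2 = (LINT t:{0..}|lebesgue. indicator {0..m} t * Dp (\<lambda>x. x) t)"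
    unfolding markov_prod_def
  proof (rule lint_countable_diff[where X = "{w1, w2}"])
    fix t :: real assume t: "0 < t" "t \<notin> {w1, w2}"
    then show "deriv (\<Lambda> w1) t * deriv (\<lambda>t. \<Lambda> t w2) t = indicator {0..m} t * Dp (\<lambda>x. x) t"
      using d1[of t] d2[of t] by (auto simp: Dp_id indicator_def m_def)
  qed simp
  also have "\<dots> = integral\<^sup>L lebesgue (\<lambda>t. indicator {0..m} t * Dp (\<lambda>x. x) t)"
    unfolding set_lebesgue_integral_def by (rule Bochner_Integration.integral_cong) (auto simp: indicator_def)
  also have "\<dots> = m - 0" by (rule lc_int_Icc(2)[OF lc_id m0])
  finally show ?thesis using z w by (simp add: m_def)
qed

theorem mainTheorem12:
  fixes \<Lambda> :: "real \<Rightarrow> real \<Rightarrow> real"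
  assumes "\<Lambda> \<in> M2"
  shows "(\<forall>w1\<ge>0. \<forall>w2\<ge>0. markov_prod \<Lambda> \<Lambda> w1 w2 = \<Lambda> w1 w2) \<longleftrightarrow>
         ((\<forall>w1\<ge>0. \<forall>w2\<ge>0. \<Lambda> w1 w2 = min w1 w2) \<or> (\<forall>w1\<ge>0. \<forall>w2\<ge>0. \<Lambda> w1 w2 = 0))"
proof
  assume "\<forall>w1\<ge>0. \<forall>w2\<ge>0. markov_prod \<Lambda> \<Lambda> w1 w2 = \<Lambda> w1 w2"
  then show "(\<forall>w1\<ge>0. \<forall>w2\<ge>0. \<Lambda> w1 w2 = min w1 w2) \<or> (\<forall>w1\<ge>0. \<forall>w2\<ge>0. \<Lambda> w1 w2 = 0)"
    by (rule forward[OF assms])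
next
  assume "(\<forall>w1\<ge>0. \<forall>w2\<ge>0. \<Lambda> w1 w2 = min w1 w2) \<or> (\<forall>w1\<ge>0. \<forall>w2\<ge>0. \<Lambda> w1 w2 = 0)"
  then show "\<forall>w1\<ge>0. \<forall>w2\<ge>0. markov_prod \<Lambda> \<Lambda> w1 w2 = \<Lambda> w1 w2"
    using backward_min backward_zero by blast
qed

end
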